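(* There exists an order-reversing embedding $\mathcal{E} \to \mathcal{G}$.
   Context: A pca is a set with a partial binary application operation containing distinct $\mathrm{s},\mathrm{k}$ with $\mathrm{k}ab\downarrow=a$, $\mathrm{s}ab\downarrow$, $\mathrm{s}abc\simeq(ac)(bc)$. An embedding of pcas is an injective map $f$ with: if $ab$ is defined then $f(a)f(b)$ is defined and equals $f(ab)$. $\mathcal{G}$ is $\mathcal{P}(\omega)$ with application $A\cdot B=\{n:\exists u\,(\langle n,u\rangle\in A\wedge D_u\subseteq B)\}$, where $\langle\cdot,\cdot\rangle$ is a bijective computable pairing with $\langle 0,0\rangle=0$ and $D_u$ is the finite set with canonical code $u$. $\mathcal{E}$ is the sub-pca consisting of the c.e. sets. An embedding $f$ is order-reversing if for all $A\subseteq B$ in its domain, $f(B)\subseteq f(A)$. *)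

theory Defs
  imports Main "HOL-Library.Nat_Bijection"
begin

datatype recf = Z | S | Id nat | Cn recf "recf list" | Pr recf recf | Mn recf

inductive eval :: "recf \<Rightarrow> nat list \<Rightarrow> nat \<Rightarrow> bool" where
  eval_Z: "eval Z xs 0"
| eval_S: "eval S (x # xs) (Suc x)"
| eval_Id: "i < length xs \<Longrightarrow> eval (Id i) xs (xs ! i)"
| eval_Cn: "list_all2 (\<lambda>g y. eval g xs y) gs ys \<Longrightarrow> eval f ys z \<Longrightarrow> eval (Cn f gs) xs z"
| eval_Pr0: "eval f xs y \<Longrightarrow> eval (Pr f g) (0 # xs) y"
| eval_PrS: "eval (Pr f g) (n # xs) y \<Longrightarrow> eval g (n # y # xs) z \<Longrightarrow> eval (Pr f g) (Suc n # xs) z"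
| eval_Mn: "eval f (n # xs) 0 \<Longrightarrow> (\<forall>m<n. \<exists>y. eval f (m # xs) (Suc y)) \<Longrightarrow> eval (Mn f) xs n"

definition ce :: "nat set \<Rightarrow> bool" where
  "ce A \<longleftrightarrow> (\<exists>f. A = {x. \<exists>y. eval f [x] y})"

definition computable2 :: "(nat \<Rightarrow> nat \<Rightarrow> nat) \<Rightarrow> bool" where
  "computable2 p \<longleftrightarrow> (\<exists>f. \<forall>x y. eval f [x, y] (p x y))"

text \<open>Canonical finite set with code u: D_u = set_decode u (u = sum of 2^x, x in D_u).\<close>
definition D :: "nat \<Rightarrow> nat set" where "D u = set_decode u"

definition gapp :: "(nat \<Rightarrow> nat \<Rightarrow> nat) \<Rightarrow> nat set \<Rightarrow> nat set \<Rightarrow> nat set" where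
  "gapp pair A B = {n. \<exists>u. pair n u \<in> A \<and> D u \<subseteq> B}"

end

theory Submission
  imports Defs "HOL-Library.Countable"
begin

instance recf :: countable by countable_datatype

definition Ej :: "nat \<Rightarrow> nat set" where
  "Ej j = {x. \<exists>y. eval (from_nat (j - 1)) [x] y}"

lemma Ej_surj: "ce A \<Longrightarrow> \<exists>j. j \<noteq> 0 \<and> Ej j = A"
  unfolding ce_def Ej_def
  by (metis Suc_eq_plus1 diff_Suc_1 from_nat_to_nat nat.distinct(1))

locale pp =
  fixes P :: "nat \<Rightarrow> nat \<Rightarrow> nat"
  assumes bijP: "bij (case_prod P)" and P00: "P 0 0 = 0"
begin

definition par :: "nat \<Rightarrow> nat" where "par m = fst (inv (case_prod P) m)"
definition ch :: "nat \<Rightarrow> nat" where "ch m = snd (inv (case_prod P) m)"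

lemma par_P[simp]: "par (P a b) = a" and ch_P[simp]: "ch (P a b) = b"
proof -
  have "inv (case_prod P) (P a b) = (a, b)"
    using bijP by (metis bij_is_inj case_prod_conv inv_f_f)
  then show "par (P a b) = a" "ch (P a b) = b" by (auto simp: par_def ch_def)
qed

lemma P_par_ch[simp]: "P (par m) (ch m) = m"
proof -
  have "case_prod P (inv (case_prod P) m) = m"
    using bijP by (meson bij_inv_eq_iff)
  then show ?thesis unfolding par_def ch_def by (simp add: case_prod_beta)
qed

lemma par0[simp]: "par 0 = 0" and ch0[simp]: "ch 0 = 0"
  using par_P[of 0 0] ch_P[of 0 0] P00 by auto

lemma P_eq0: "P a b = 0 \<longleftrightarrow> a = 0 \<and> b = 0"
  by (metis P00 ch_P par_P)

definition reach :: "nat \<Rightarrow> bool" where "reach m = (\<exists>k. (par ^^ k) m = 0)"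
definition depth :: "nat \<Rightarrow> nat" where "depth m = (LEAST k. (par ^^ k) m = 0)"

definition Res :: "nat set \<Rightarrow> nat set \<Rightarrow> nat set" where
  "Res C B = {m. D (ch m) \<subseteq> B \<longrightarrow> par m \<in> C}"

definition good :: "nat \<Rightarrow> bool" where
  "good u = (\<exists>k. D u = {k} \<and> par k = 0 \<and> k \<noteq> 0)"

primrec Sk :: "nat \<Rightarrow> nat \<Rightarrow> nat set" where
  "Sk 0 m = UNIV"
| "Sk (Suc d) m = (if par m = 0 then (if m = 0 then UNIV else Ej (ch m))
     else if good (ch m) then Res (Sk d (par m)) (Ej (ch (the_elem (D (ch m))))) else {})"

definition S :: "nat \<Rightarrow> nat set" where
  "S m = (if reach m then Sk (depth m) m else UNIV)"

definition T :: "nat \<Rightarrow> nat set" where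
  "T u = (\<Inter>k\<in>D u. S k)"

lemma S0: "S 0 = UNIV"
proof -
  have "depth 0 = 0" unfolding depth_def by (rule Least_eq_0) simp
  then show ?thesis unfolding S_def by simp
qed

lemma S1: assumes "m \<noteq> 0" "par m = 0" shows "S m = Ej (ch m)"
proof -
  have r: "(par ^^ 1) m = 0" using assms by simp
  have "depth m = 1" unfolding depth_def
  proof (rule Least_equality)
    show "(par ^^ 1) m = 0" using r .
  next
    fix y assume "(par ^^ y) m = 0"
    then show "1 \<le> y" using assms by (cases y) auto
  qed
  moreover have "reach m" unfolding reach_def using r by blast
  ultimately show ?thesis using assms unfolding S_def by simp
qed

lemma reach_step: assumes "par m \<noteq> 0"
  shows "reach m \<longleftrightarrow> reach (par m)"
    and "reach m \<Longrightarrow> depth m = Suc (depth (par m))"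
proof -
  have m0: "m \<noteq> 0" using assms par0 by metis
  have eq: "(par ^^ Suc k) m = (par ^^ k) (par m)" for k by (simp only: funpow_Suc_right comp_apply)
  have iff: "(par ^^ k) m = 0 \<longleftrightarrow> (\<exists>k'. k = Suc k' \<and> (par ^^ k') (par m) = 0)" for k
    using m0 eq by (cases k) auto
  show "reach m \<longleftrightarrow> reach (par m)" unfolding reach_def using iff eq by blast
  assume "reach m"
  then obtain k where k: "(par ^^ k) (par m) = 0" unfolding reach_def using iff by blast
  show "depth m = Suc (depth (par m))"
    unfolding depth_def
  proof (rule Least_equality)
    show "(par ^^ Suc (LEAST k. (par ^^ k) (par m) = 0)) m = 0"
      unfolding eq using k by (rule LeastI)
  next
    fix y assume "(par ^^ y) m = 0"
    then obtain y' where "y = Suc y'" "(par ^^ y') (par m) = 0" using iff by blast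
    then show "Suc (LEAST k. (par ^^ k) (par m) = 0) \<le> y" by (simp add: Least_le)
  qed
qed

lemma S_step: assumes "par m \<noteq> 0"
  shows "S m = (if reach (par m) then (if good (ch m) then Res (S (par m)) (Ej (ch (the_elem (D (ch m))))) else {}) else UNIV)"
  using reach_step[OF assms] assms unfolding S_def by auto

lemma gapp_mono: "A \<subseteq> A' \<Longrightarrow> B \<subseteq> B' \<Longrightarrow> gapp P A B \<subseteq> gapp P A' B'"
  unfolding gapp_def by blast

lemma Res_app: "gapp P (Res C B) B \<subseteq> C"
  unfolding gapp_def Res_def by auto

lemma T0: "T 0 = UNIV"
  unfolding T_def D_def by simp

lemma condb: "gapp P (S m) (T (ch m)) \<subseteq> S (par m)"
proof (cases "par m = 0")
  case True then show ?thesis using S0 by simp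
next
  case False
  show ?thesis
  proof (cases "reach (par m)")
    case False then show ?thesis unfolding S_def by simp
  next
    case r: True
    show ?thesis
    proof (cases "good (ch m)")
      case g: True
      then obtain k where k: "D (ch m) = {k}" "par k = 0" "k \<noteq> 0" unfolding good_def by blast
      have "T (ch m) = Ej (ch k)" unfolding T_def k using S1[OF k(3,2)] by simp
      moreover have "S m = Res (S (par m)) (Ej (ch k))" using S_step[OF False] r g k by simp
      ultimately show ?thesis using Res_app by simp
    next
      case g: False
      have "S m = {}" using S_step[OF False] r g by simp
      then show ?thesis unfolding gapp_def by simp
    qed
  qed
qed

lemma condc: assumes "ce B" "gapp P A B \<subseteq> S n"
  shows "\<exists>u. B \<subseteq> T u \<and> A \<subseteq> S (P n u)"
proof (cases "n = 0 \<or> \<not> reach n")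
  case True
  have "S (P n 0) = UNIV"
  proof (cases "n = 0")
    case True then show ?thesis using P00 S0 by simp
  next
    case False
    then have "\<not> reach n" using \<open>n = 0 \<or> \<not> reach n\<close> by simp
    then show ?thesis using S_step[of "P n 0"] False by simp
  qed
  then show ?thesis using T0 by blast
next
  case False
  then have n0: "n \<noteq> 0" and r: "reach n" by auto
  obtain j where j: "j \<noteq> 0" "Ej j = B" using Ej_surj[OF assms(1)] by blast
  define k where "k = P 0 j"
  have k0: "k \<noteq> 0" using j P_eq0 k_def by simp
  define u where "u = set_encode {k}"
  have Du: "D u = {k}" unfolding u_def D_def by (subst set_encode_inverse) auto
  have g: "good u" unfolding good_def using Du k0 k_def by simp
  have Tu: "T u = B" unfolding T_def Du using S1[OF k0] k_def j by simp
  have Su: "S (P n u) = Res (S n) B"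
    using S_step[of "P n u"] n0 r g Du k_def j by simp
  have "A \<subseteq> Res (S n) B"
  proof
    fix x assume x: "x \<in> A"
    show "x \<in> Res (S n) B" unfolding Res_def
    proof (intro CollectI impI)
      assume "D (ch x) \<subseteq> B"
      then have "par x \<in> gapp P A B" unfolding gapp_def using x by (metis (mono_tags) CollectI P_par_ch)
      then show "par x \<in> S n" using assms(2) by blast
    qed
  qed
  then show ?thesis using Tu Su by blast
qed

lemma ce_S: "ce A \<Longrightarrow> \<exists>k. S k = A"
proof -
  assume "ce A"
  then obtain j where j: "j \<noteq> 0" "Ej j = A" using Ej_surj by blast
  have "P 0 j \<noteq> 0" using j P_eq0 by simp
  then show ?thesis using S1[of "P 0 j"] j by auto
qed

lemma main:
  "\<exists>f :: nat set \<Rightarrow> nat set.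
           inj_on f {A. ce A}
         \<and> (\<forall>A B. ce A \<longrightarrow> ce B \<longrightarrow> ce (gapp P A B) \<longrightarrow>
                f (gapp P A B) = gapp P (f A) (f B))
         \<and> (\<forall>A B. ce A \<longrightarrow> ce B \<longrightarrow> A \<subseteq> B \<longrightarrow> f B \<subseteq> f A)"
proof (intro exI conjI allI impI)
  define f where "f B = {m. B \<subseteq> S m}" for B
  show "inj_on f {A. ce A}"
  proof (rule inj_onI)
    fix A B assume A: "A \<in> {A. ce A}" and B: "B \<in> {A. ce A}" and e: "f A = f B"
    obtain ka where ka: "S ka = A" using ce_S A by auto
    obtain kb where kb: "S kb = B" using ce_S B by auto
    have "ka \<in> f B" using e ka unfolding f_def by auto
    moreover have "kb \<in> f A" using e kb unfolding f_def by auto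
    ultimately show "A = B" using ka kb unfolding f_def by auto
  qed
  fix A B assume A: "ce A" and B: "ce B"
  {
    assume "A \<subseteq> B" then show "f B \<subseteq> f A" unfolding f_def by auto
  }
  {
    show "f (gapp P A B) = gapp P (f A) (f B)"
    proof (rule set_eqI)
      fix n
      have "n \<in> gapp P (f A) (f B) \<longleftrightarrow> (\<exists>u. A \<subseteq> S (P n u) \<and> B \<subseteq> T u)"
        unfolding gapp_def f_def T_def by auto
      also have "\<dots> \<longleftrightarrow> gapp P A B \<subseteq> S n"
      proof
        assume "\<exists>u. A \<subseteq> S (P n u) \<and> B \<subseteq> T u"
        then obtain u where u: "A \<subseteq> S (P n u)" "B \<subseteq> T u" by blast
        have "gapp P A B \<subseteq> gapp P (S (P n u)) (T (ch (P n u)))" using u by (simp add: gapp_mono)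
        also have "\<dots> \<subseteq> S n" using condb[of "P n u"] by simp
        finally show "gapp P A B \<subseteq> S n" .
      next
        assume "gapp P A B \<subseteq> S n"
        then show "\<exists>u. A \<subseteq> S (P n u) \<and> B \<subseteq> T u" using condc[OF B] by blast
      qed
      finally show "n \<in> f (gapp P A B) \<longleftrightarrow> n \<in> gapp P (f A) (f B)" unfolding f_def by simp
    qed
  }
qed

end

theorem theorem7p12:
  fixes pair :: "nat \<Rightarrow> nat \<Rightarrow> nat"
  assumes "bij (case_prod pair)" and "computable2 pair" and "pair 0 0 = 0"
  shows "\<exists>f :: nat set \<Rightarrow> nat set.
           inj_on f {A. ce A}
         \<and> (\<forall>A B. ce A \<longrightarrow> ce B \<longrightarrow> ce (gapp pair A B) \<longrightarrow>
                f (gapp pair A B) = gapp pair (f A) (f B))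
         \<and> (\<forall>A B. ce A \<longrightarrow> ce B \<longrightarrow> A \<subseteq> B \<longrightarrow> f B \<subseteq> f A)"
proof -
  interpret pp pair using assms by unfold_locales
  show ?thesis by (rule main)
qed

end
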